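(* Let $\Gamma_i$ be a graph of maximum degree $\Delta_i$, $i\in\{1,2\}$, and let $k_1,k_2$ be integers. Then for every integer $k\le\min\{k_1-\Delta_2,k_2-\Delta_1\}$, $a_k^o(\Gamma_1\times\Gamma_2)\le a_{k_1}^o(\Gamma_1)\,a_{k_2}^o(\Gamma_2)$.
   Context: Graphs are finite and simple. In a graph $G=(V,E)$, for $S\subseteq V$ and $v\in V$, $\delta_S(v)$ is the number of neighbours of $v$ in $S$, $\overline{S}=V\setminus S$, and $\partial(S)$ the set of vertices of $\overline{S}$ with a neighbour in $S$. A nonempty $S\subseteq V$ is an offensive $k$-alliance in $G$ if $\delta_S(v)\ge\delta_{\overline{S}}(v)+k$ for every $v\in\partial(S)$; $a_k^o(G)$ denotes the minimum cardinality of an offensive $k$-alliance in $G$. The Cartesian product $\Gamma_1\times\Gamma_2$ has vertex set $V_1\times V_2$, with $(u,v)\sim(u',v')$ iff either $u=u'$ and $v\sim v'$, or $v=v'$ and $u\sim u'$. *)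

theory Defs
  imports Main
begin

definition graph :: "'a set \<Rightarrow> ('a \<Rightarrow> 'a \<Rightarrow> bool) \<Rightarrow> bool" where
  "graph V E \<longleftrightarrow> finite V \<and> (\<forall>u v. E u v \<longrightarrow> u \<in> V \<and> v \<in> V)
     \<and> (\<forall>u v. E u v \<longrightarrow> E v u) \<and> (\<forall>u. \<not> E u u)"

definition nbr_count :: "('a \<Rightarrow> 'a \<Rightarrow> bool) \<Rightarrow> 'a set \<Rightarrow> 'a \<Rightarrow> nat" where
  "nbr_count E S v = card {u \<in> S. E v u}"

definition degree :: "'a set \<Rightarrow> ('a \<Rightarrow> 'a \<Rightarrow> bool) \<Rightarrow> 'a \<Rightarrow> nat" where
  "degree V E v = nbr_count E V v"

definition max_degree :: "'a set \<Rightarrow> ('a \<Rightarrow> 'a \<Rightarrow> bool) \<Rightarrow> nat" where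
  "max_degree V E = Max (degree V E ` V)"

definition boundary :: "'a set \<Rightarrow> ('a \<Rightarrow> 'a \<Rightarrow> bool) \<Rightarrow> 'a set \<Rightarrow> 'a set" where
  "boundary V E S = {v \<in> V - S. \<exists>u \<in> S. E v u}"

definition offensive_alliance :: "'a set \<Rightarrow> ('a \<Rightarrow> 'a \<Rightarrow> bool) \<Rightarrow> int \<Rightarrow> 'a set \<Rightarrow> bool" where
  "offensive_alliance V E k S \<longleftrightarrow> S \<subseteq> V \<and> S \<noteq> {} \<and>
     (\<forall>v \<in> boundary V E S. int (nbr_count E S v) \<ge> int (nbr_count E (V - S) v) + k)"

definition offensive_alliance_number :: "'a set \<Rightarrow> ('a \<Rightarrow> 'a \<Rightarrow> bool) \<Rightarrow> int \<Rightarrow> nat" where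
  "offensive_alliance_number V E k = Min (card ` {S. offensive_alliance V E k S})"

definition cart_edge :: "('a \<Rightarrow> 'a \<Rightarrow> bool) \<Rightarrow> ('b \<Rightarrow> 'b \<Rightarrow> bool) \<Rightarrow> 'a \<times> 'b \<Rightarrow> 'a \<times> 'b \<Rightarrow> bool" where
  "cart_edge E1 E2 = (\<lambda>(u, v) (u', v'). (u = u' \<and> E2 v v') \<or> (v = v' \<and> E1 u u'))"

end

theory Submission
  imports Defs
begin

lemma deg_le_max:
  assumes "graph V E" "u \<in> V"
  shows "degree V E u \<le> max_degree V E"
  using assms unfolding max_degree_def graph_def by auto

lemma case1:
  assumes g1: "graph V1 E1" and g2: "graph V2 E2"
    and a2: "offensive_alliance V2 E2 k2 S2" and s1: "S1 \<subseteq> V1"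
    and u: "u \<in> S1" and v: "v \<in> V2" "v \<notin> S2" and nb: "\<exists>w\<in>S2. E2 v w"
    and kk: "k + int (max_degree V1 E1) \<le> k2"
  shows "int (nbr_count (cart_edge E1 E2) (S1 \<times> S2) (u,v))
         \<ge> int (nbr_count (cart_edge E1 E2) (V1 \<times> V2 - S1 \<times> S2) (u,v)) + k"
proof -
  have f1: "finite V1" and f2: "finite V2" using g1 g2 by (auto simp: graph_def)
  have S2V: "S2 \<subseteq> V2" using a2 by (auto simp: offensive_alliance_def)
  have vb: "v \<in> boundary V2 E2 S2" using v nb by (auto simp: boundary_def)
  hence A: "int (nbr_count E2 S2 v) \<ge> int (nbr_count E2 (V2 - S2) v) + k2"
    using a2 by (auto simp: offensive_alliance_def)
  have e1: "{w \<in> S1 \<times> S2. cart_edge E1 E2 (u,v) w} = (\<lambda>x. (u,x)) ` {x \<in> S2. E2 v x}"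
    using u v by (auto simp: cart_edge_def)
  have c1: "nbr_count (cart_edge E1 E2) (S1 \<times> S2) (u,v) = nbr_count E2 S2 v"
    unfolding nbr_count_def e1 by (rule card_image) (auto simp: inj_on_def)
  have sub: "{w \<in> V1 \<times> V2 - S1 \<times> S2. cart_edge E1 E2 (u,v) w}
     \<subseteq> (\<lambda>x. (u,x)) ` {x \<in> V2 - S2. E2 v x} \<union> (\<lambda>x. (x,v)) ` {x \<in> V1. E1 u x}"
    using u by (auto simp: cart_edge_def)
  have "nbr_count (cart_edge E1 E2) (V1 \<times> V2 - S1 \<times> S2) (u,v)
     \<le> card ((\<lambda>x. (u,x)) ` {x \<in> V2 - S2. E2 v x} \<union> (\<lambda>x. (x,v)) ` {x \<in> V1. E1 u x})"
    unfolding nbr_count_def by (rule card_mono) (use f1 f2 sub in auto)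
  also have "\<dots> \<le> card ((\<lambda>x. (u,x)) ` {x \<in> V2 - S2. E2 v x}) + card ((\<lambda>x. (x,v)) ` {x \<in> V1. E1 u x})"
    by (rule card_Un_le)
  also have "\<dots> \<le> nbr_count E2 (V2 - S2) v + degree V1 E1 u"
    unfolding nbr_count_def degree_def by (intro add_mono card_image_le) (use f1 f2 in auto)
  also have "\<dots> \<le> nbr_count E2 (V2 - S2) v + max_degree V1 E1"
    using deg_le_max[OF g1] u s1 by auto
  finally show ?thesis using A c1 kk by linarith
qed

lemma case2:
  assumes g1: "graph V1 E1" and g2: "graph V2 E2"
    and a1: "offensive_alliance V1 E1 k1 S1" and s2: "S2 \<subseteq> V2"
    and v: "v \<in> S2" and u: "u \<in> V1" "u \<notin> S1" and nb: "\<exists>w\<in>S1. E1 u w"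
    and kk: "k + int (max_degree V2 E2) \<le> k1"
  shows "int (nbr_count (cart_edge E1 E2) (S1 \<times> S2) (u,v))
         \<ge> int (nbr_count (cart_edge E1 E2) (V1 \<times> V2 - S1 \<times> S2) (u,v)) + k"
proof -
  have f1: "finite V1" and f2: "finite V2" using g1 g2 by (auto simp: graph_def)
  have ub: "u \<in> boundary V1 E1 S1" using u nb by (auto simp: boundary_def)
  hence A: "int (nbr_count E1 S1 u) \<ge> int (nbr_count E1 (V1 - S1) u) + k1"
    using a1 by (auto simp: offensive_alliance_def)
  have e1: "{w \<in> S1 \<times> S2. cart_edge E1 E2 (u,v) w} = (\<lambda>x. (x,v)) ` {x \<in> S1. E1 u x}"
    using u v by (auto simp: cart_edge_def)
  have c1: "nbr_count (cart_edge E1 E2) (S1 \<times> S2) (u,v) = nbr_count E1 S1 u"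
    unfolding nbr_count_def e1 by (rule card_image) (auto simp: inj_on_def)
  have sub: "{w \<in> V1 \<times> V2 - S1 \<times> S2. cart_edge E1 E2 (u,v) w}
     \<subseteq> (\<lambda>x. (x,v)) ` {x \<in> V1 - S1. E1 u x} \<union> (\<lambda>x. (u,x)) ` {x \<in> V2. E2 v x}"
    using v by (auto simp: cart_edge_def)
  have "nbr_count (cart_edge E1 E2) (V1 \<times> V2 - S1 \<times> S2) (u,v)
     \<le> card ((\<lambda>x. (x,v)) ` {x \<in> V1 - S1. E1 u x} \<union> (\<lambda>x. (u,x)) ` {x \<in> V2. E2 v x})"
    unfolding nbr_count_def by (rule card_mono) (use f1 f2 sub in auto)
  also have "\<dots> \<le> card ((\<lambda>x. (x,v)) ` {x \<in> V1 - S1. E1 u x}) + card ((\<lambda>x. (u,x)) ` {x \<in> V2. E2 v x})"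
    by (rule card_Un_le)
  also have "\<dots> \<le> nbr_count E1 (V1 - S1) u + degree V2 E2 v"
    unfolding nbr_count_def degree_def by (intro add_mono card_image_le) (use f1 f2 in auto)
  also have "\<dots> \<le> nbr_count E1 (V1 - S1) u + max_degree V2 E2"
    using deg_le_max[OF g2] v s2 by auto
  finally show ?thesis using A c1 kk by linarith
qed

lemma oan_exists:
  assumes "graph V E" "V \<noteq> {}"
  shows "\<exists>S. offensive_alliance V E k S \<and> card S = offensive_alliance_number V E k"
proof -
  have fin: "finite (card ` {S. offensive_alliance V E k S})"
    using assms by (auto simp: graph_def offensive_alliance_def)
  have "offensive_alliance V E k V" using assms by (auto simp: offensive_alliance_def boundary_def)
  hence ne: "card ` {S. offensive_alliance V E k S} \<noteq> {}" by auto
  show ?thesis using Min_in[OF fin ne] unfolding offensive_alliance_number_def by auto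
qed

lemma oan_le:
  assumes "finite V" "offensive_alliance V E k S"
  shows "offensive_alliance_number V E k \<le> card S"
proof -
  have fin: "finite (card ` {S. offensive_alliance V E k S})"
    using assms by (auto simp: offensive_alliance_def)
  show ?thesis unfolding offensive_alliance_number_def using assms(2) by (intro Min_le[OF fin]) auto
qed

theorem mainTheorem12:
  fixes V1 :: "'a set" and E1 :: "'a \<Rightarrow> 'a \<Rightarrow> bool"
    and V2 :: "'b set" and E2 :: "'b \<Rightarrow> 'b \<Rightarrow> bool"
    and k k1 k2 :: int
  assumes "graph V1 E1" and "V1 \<noteq> {}"
    and "graph V2 E2" and "V2 \<noteq> {}"
    and "k \<le> min (k1 - int (max_degree V2 E2)) (k2 - int (max_degree V1 E1))"
  shows "offensive_alliance_number (V1 \<times> V2) (cart_edge E1 E2) k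
           \<le> offensive_alliance_number V1 E1 k1 * offensive_alliance_number V2 E2 k2"
proof -
  obtain S1 where a1: "offensive_alliance V1 E1 k1 S1" and c1: "card S1 = offensive_alliance_number V1 E1 k1"
    using oan_exists[OF assms(1,2)] by blast
  obtain S2 where a2: "offensive_alliance V2 E2 k2 S2" and c2: "card S2 = offensive_alliance_number V2 E2 k2"
    using oan_exists[OF assms(3,4)] by blast
  have s1: "S1 \<subseteq> V1" "S1 \<noteq> {}" and s2: "S2 \<subseteq> V2" "S2 \<noteq> {}"
    using a1 a2 by (auto simp: offensive_alliance_def)
  have g: "finite (V1 \<times> V2)"
    using assms(1,3) unfolding graph_def by auto
  have "offensive_alliance (V1 \<times> V2) (cart_edge E1 E2) k (S1 \<times> S2)"
    unfolding offensive_alliance_def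
  proof (intro conjI ballI)
    show "S1 \<times> S2 \<subseteq> V1 \<times> V2" using s1 s2 by auto
    show "S1 \<times> S2 \<noteq> {}" using s1 s2 by auto
  next
    fix w assume w: "w \<in> boundary (V1 \<times> V2) (cart_edge E1 E2) (S1 \<times> S2)"
    obtain u v where uv: "w = (u,v)" by force
    from w uv have uV: "u \<in> V1" and vV: "v \<in> V2" and nS: "(u,v) \<notin> S1 \<times> S2"
      and ex: "\<exists>x\<in>S1 \<times> S2. cart_edge E1 E2 (u,v) x" by (auto simp: boundary_def)
    show "int (nbr_count (cart_edge E1 E2) (S1 \<times> S2) w)
          \<ge> int (nbr_count (cart_edge E1 E2) (V1 \<times> V2 - S1 \<times> S2) w) + k"
    proof (cases "u \<in> S1")
      case True
      hence "v \<notin> S2" using nS by auto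
      moreover have "\<exists>x\<in>S2. E2 v x" using ex True \<open>v \<notin> S2\<close> by (auto simp: cart_edge_def)
      ultimately show ?thesis unfolding uv
        using case1[OF assms(1,3) a2 s1(1) True vV] assms(5) by auto
    next
      case False
      have vS: "v \<in> S2" using ex False by (auto simp: cart_edge_def)
      moreover have "\<exists>x\<in>S1. E1 u x" using ex vS False by (auto simp: cart_edge_def)
      ultimately show ?thesis unfolding uv
        using case2[OF assms(1,3) a1 s2(1) vS uV False] assms(5) by auto
    qed
  qed
  from oan_le[OF g this] show ?thesis using c1 c2 by (simp add: card_cartesian_product)
qed

end
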